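(* Let $r\in\mathbb{N}$ and $v\in\mathbb{YF}^r$. Then $$d_r(\varepsilon,v)=d_1(\varepsilon,s(v))\cdot r^{d(v)}=r^{d(v)}\prod_{j=1}^{d(v)}g(v,j).$$
   Context: Fix $r\in\mathbb{N}$. Words and statistics. Consider finite words over $\{1_1,\dots,1_r,2\}$. A letter $1_i$ is a one with digit value $1$; $2$ is a two with digit value $2$. $\varepsilon$ is the empty word. $|x|$ is the sum of digit values, $d(x)$ the number of twos. The graph $\mathbb{YF}^r$. It is the graded graph on all finite words, graded by $|\cdot|$. From $x$ there is a downward edge to every word obtained by one of two operations: (i) delete the leftmost one; (ii) replace a $2$ lying left of the leftmost one (any $2$ if there are no ones) by $1_i$, with arbitrary $i\in\{1,\dots,r\}$. For $r=1$ write $1$ for $1_1$; $\mathbb{YF}=\mathbb{YF}^1$. The map $s:\mathbb{YF}^r\to\mathbb{YF}$ replaces every $1_i$ by $1$. Path counts. $d_r(x,y)$ is the number of downward paths $y=y_n\to\dots\to y_m=x$ in $\mathbb{YF}^r$ with $|y_i|=i$; $d_1$ is the count in $\mathbb{YF}$. The function $g$. Write $x=2\,1^{\beta_m}\,2\cdots2\,1^{\beta_1}\,2\,1^{\beta_0}$ (possibly preceded by a block of ones), where $1^{\beta}$ is a possibly empty block of $\beta$ consecutive ones. For $1\le j\le d(x)$ set $g(x,j)=\beta_0+\dots+\beta_{j-1}+2j-1$. *)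

theory Defs
  imports Main
begin

text \<open>Letters: One i stands for the one 1_i, Two for the two. Words are lists, read left to right.\<close>
datatype letter = One nat | Two

fun dval :: "letter \<Rightarrow> nat" where
  "dval (One i) = 1"
| "dval Two = 2"

definition rank :: "letter list \<Rightarrow> nat" where
  "rank x = sum_list (map dval x)"

definition ntwo :: "letter list \<Rightarrow> nat" where
  "ntwo x = length (filter (\<lambda>a. a = Two) x)"

definition valid :: "nat \<Rightarrow> letter list \<Rightarrow> bool" where
  "valid r x \<longleftrightarrow> (\<forall>i. One i \<in> set x \<longrightarrow> 1 \<le> i \<and> i \<le> r)"

definition edge :: "nat \<Rightarrow> letter list \<Rightarrow> letter list \<Rightarrow> bool" where
  "edge r y x \<longleftrightarrow> valid r y \<and>
     ((\<exists>u i w. y = u @ One i # w \<and> set u \<subseteq> {Two} \<and> x = u @ w) \<or>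
      (\<exists>u w i. y = u @ Two # w \<and> set u \<subseteq> {Two} \<and> 1 \<le> i \<and> i \<le> r \<and> x = u @ One i # w))"

definition dpaths :: "nat \<Rightarrow> letter list \<Rightarrow> letter list \<Rightarrow> nat" where
  "dpaths r x y = card {p. p \<noteq> [] \<and> hd p = y \<and> last p = x \<and> successively (edge r) p \<and>
       (\<forall>k < length p. rank (p ! k) + k = rank y)}"

definition s :: "letter list \<Rightarrow> letter list" where
  "s x = map (\<lambda>a. case a of One i \<Rightarrow> One 1 | Two \<Rightarrow> Two) x"

text \<open>Run lengths of ones of a reversed word: for rev x = 1^b0 2 1^b1 2 ... 2 1^bm 2 1^c
  this yields [b0, b1, ..., bm, c].\<close>
fun blocks :: "letter list \<Rightarrow> nat list" where
  "blocks [] = [0]"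
| "blocks (One i # w) = Suc (hd (blocks w)) # tl (blocks w)"
| "blocks (Two # w) = 0 # blocks w"

text \<open>beta x k = \<beta>_k in x = 2 1^{\<beta>_m} 2 ... 2 1^{\<beta>_1} 2 1^{\<beta>_0}, possibly preceded by ones\<close>
definition beta :: "letter list \<Rightarrow> nat \<Rightarrow> nat" where
  "beta x k = blocks (rev x) ! k"

definition g :: "letter list \<Rightarrow> nat \<Rightarrow> nat" where
  "g x j = (\<Sum>k<j. beta x k) + 2 * j - 1"

end

theory Submission imports Defs begin

lemma valid_Cons_Two[simp]: "valid r (Two # u) = valid r u"
  by (auto simp: valid_def)
lemma valid_Cons_One[simp]: "valid r (One i # u) = (1 \<le> i \<and> i \<le> r \<and> valid r u)"
  by (auto simp: valid_def)
lemma valid_Nil[simp]: "valid r []" by (simp add: valid_def)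

lemma E0[simp]: "\<not> edge r [] x"
  by (auto simp: edge_def)

lemma E1: "edge r (One i # u) x \<longleftrightarrow> valid r (One i # u) \<and> x = u"
proof
  assume h: "edge r (One i # u) x"
  then have v: "valid r (One i # u)" by (simp add: edge_def)
  from h consider (a) u0 j w where "One i # u = u0 @ One j # w" "set u0 \<subseteq> {Two}" "x = u0 @ w"
    | (b) u0 w j where "One i # u = u0 @ Two # w" "set u0 \<subseteq> {Two}" "x = u0 @ One j # w"
    unfolding edge_def by blast
  then show "valid r (One i # u) \<and> x = u"
  proof cases
    case a then show ?thesis using v by (cases u0) auto
  next
    case b then show ?thesis by (cases u0) auto
  qed
next
  assume "valid r (One i # u) \<and> x = u"
  then show "edge r (One i # u) x" unfolding edge_def
    by (metis append_Nil empty_subsetI empty_set)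
qed

lemma E2: "edge r (Two # u) x \<longleftrightarrow> valid r u \<and> ((\<exists>i. 1\<le>i \<and> i\<le>r \<and> x = One i # u) \<or> (\<exists>x'. x = Two # x' \<and> edge r u x'))"
proof
  assume h: "edge r (Two # u) x"
  then have v: "valid r u" by (simp add: edge_def)
  from h consider (a) u0 j w where "Two # u = u0 @ One j # w" "set u0 \<subseteq> {Two}" "x = u0 @ w"
    | (b) u0 w j where "Two # u = u0 @ Two # w" "set u0 \<subseteq> {Two}" "1 \<le> j" "j \<le> r" "x = u0 @ One j # w"
    unfolding edge_def by blast
  then show "valid r u \<and> ((\<exists>i. 1\<le>i \<and> i\<le>r \<and> x = One i # u) \<or> (\<exists>x'. x = Two # x' \<and> edge r u x'))"
  proof cases
    case a
    then obtain u1 where "u0 = Two # u1" by (cases u0) auto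
    with a v show ?thesis unfolding edge_def by auto
  next
    case b
    show ?thesis
    proof (cases u0)
      case Nil with b v show ?thesis by auto
    next
      case (Cons c u1)
      with b have "u = u1 @ Two # w" "set u1 \<subseteq> {Two}" by auto
      with b v have "edge r u (u1 @ One j # w)" unfolding edge_def by blast
      with b Cons v show ?thesis by auto
    qed
  qed
next
  assume h: "valid r u \<and> ((\<exists>i. 1\<le>i \<and> i\<le>r \<and> x = One i # u) \<or> (\<exists>x'. x = Two # x' \<and> edge r u x'))"
  then have v: "valid r u" by simp
  from h consider (a) i where "1\<le>i" "i\<le>r" "x = One i # u" | (b) x' where "x = Two # x'" "edge r u x'"
    by blast
  then show "edge r (Two # u) x"
  proof cases
    case a then show ?thesis unfolding edge_def using v
      by (metis append_Nil empty_subsetI empty_set valid_Cons_Two)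
  next
    case b
    from b(2) consider (c) u0 j w where "u = u0 @ One j # w" "set u0 \<subseteq> {Two}" "x' = u0 @ w"
    | (d) u0 w j where "u = u0 @ Two # w" "set u0 \<subseteq> {Two}" "1 \<le> j" "j \<le> r" "x' = u0 @ One j # w"
      unfolding edge_def by blast
    then show ?thesis
    proof cases
      case c then show ?thesis unfolding edge_def using v b(1)
        by (intro conjI disjI1 exI[of _ "Two # u0"] exI[of _ j] exI[of _ w]) auto
    next
      case d then show ?thesis unfolding edge_def using v b(1)
        by (intro conjI disjI2 exI[of _ "Two # u0"] exI[of _ j] exI[of _ w]) auto
    qed
  qed
qed

lemma rank_Cons[simp]: "rank (a # u) = dval a + rank u" by (simp add: rank_def)
lemma rank_Nil[simp]: "rank [] = 0" by (simp add: rank_def)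

lemma edge_rank: "edge r y x \<Longrightarrow> rank y = Suc (rank x)"
proof (induction y arbitrary: x)
  case Nil then show ?case by simp
next
  case (Cons a u)
  show ?case
  proof (cases a)
    case (One i) with Cons show ?thesis by (auto simp: E1)
  next
    case Two with Cons show ?thesis by (auto simp: E2)
  qed
qed

lemma edge_valid: "edge r y x \<Longrightarrow> valid r x"
proof (induction y arbitrary: x)
  case Nil then show ?case by simp
next
  case (Cons a u)
  show ?case
  proof (cases a)
    case (One i) with Cons show ?thesis by (auto simp: E1)
  next
    case Two with Cons show ?thesis by (auto simp: E2)
  qed
qed

lemma fin_succ: "finite {x. edge r y x}"
proof (induction y)
  case Nil then show ?case by simp
next
  case (Cons a u)
  show ?case
  proof (cases a)
    case (One i)
    then have "{x. edge r (a # u) x} \<subseteq> {u}" by (auto simp: E1)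
    then show ?thesis using finite_subset by blast
  next
    case Two
    then have "{x. edge r (a # u) x} \<subseteq> (\<lambda>i. One i # u) ` {1..r} \<union> (Cons Two) ` {x. edge r u x}"
      by (auto simp: E2)
    then show ?thesis using finite_subset Cons by blast
  qed
qed

definition PS :: "nat \<Rightarrow> letter list \<Rightarrow> letter list list set" where
  "PS r y = {p. p \<noteq> [] \<and> hd p = y \<and> last p = [] \<and> successively (edge r) p \<and>
       (\<forall>k < length p. rank (p ! k) + k = rank y)}"

lemma dpaths_PS: "dpaths r [] y = card (PS r y)"
  by (simp add: dpaths_def PS_def)

lemma PS_Nil: "PS r [] = {[[]]}"
proof -
  have "p = [[]]" if "p \<in> PS r []" for p
  proof -
    from that obtain q where p: "p = [] # q" "successively (edge r) ([] # q)"
      unfolding PS_def by (cases p) auto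
    then show ?thesis by (cases q) auto
  qed
  then show ?thesis by (auto simp: PS_def)
qed

lemma PS_Cons: "y \<noteq> [] \<Longrightarrow> PS r y = (\<Union>x\<in>{x. edge r y x}. Cons y ` PS r x)"
proof (intro equalityI subsetI)
  fix p assume y: "y \<noteq> []" and p: "p \<in> PS r y"
  then obtain q where pq: "p = y # q" unfolding PS_def by (cases p) auto
  with p y have "q \<noteq> []" unfolding PS_def by auto
  then obtain x q' where q: "q = x # q'" by (cases q) auto
  from p pq q have e: "edge r y x" and sq: "successively (edge r) q" unfolding PS_def by auto
  have rk: "rank y = Suc (rank x)" using edge_rank[OF e] .
  have "q \<in> PS r x" unfolding PS_def
  proof (intro CollectI conjI allI impI)
    show "last q = []" using p pq q unfolding PS_def by auto
    fix k assume "k < length q"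
    then have "rank (p ! Suc k) + Suc k = rank y" using p pq unfolding PS_def by auto
    then show "rank (q ! k) + k = rank x" using pq rk by simp
  qed (use q sq in auto)
  then show "p \<in> (\<Union>x\<in>{x. edge r y x}. Cons y ` PS r x)" using e pq q by auto
next
  fix p assume y: "y \<noteq> []" and p: "p \<in> (\<Union>x\<in>{x. edge r y x}. Cons y ` PS r x)"
  then obtain x q where e: "edge r y x" and q: "q \<in> PS r x" and pq: "p = y # q" by auto
  have rk: "rank y = Suc (rank x)" using edge_rank[OF e] .
  from q obtain q' where q': "q = x # q'" unfolding PS_def by (cases q) auto
  show "p \<in> PS r y" unfolding PS_def
  proof (intro CollectI conjI allI impI)
    show "last p = []" using q pq q' unfolding PS_def by auto
    show "successively (edge r) p" using q pq q' e unfolding PS_def by auto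
    fix k assume k: "k < length p"
    show "rank (p ! k) + k = rank y"
    proof (cases k)
      case 0 then show ?thesis using pq by simp
    next
      case (Suc j)
      with k pq have "j < length q" by simp
      with q have "rank (q ! j) + j = rank x" unfolding PS_def by auto
      then show ?thesis using Suc pq rk by simp
    qed
  qed (use pq in auto)
qed

lemma card_PS_Cons:
  assumes "y \<noteq> []" "\<And>x. edge r y x \<Longrightarrow> finite (PS r x)"
  shows "finite (PS r y) \<and> card (PS r y) = (\<Sum>x\<in>{x. edge r y x}. card (PS r x))"
proof -
  have "card (\<Union>x\<in>{x. edge r y x}. Cons y ` PS r x) = (\<Sum>x\<in>{x. edge r y x}. card (Cons y ` PS r x))"
    by (rule card_UN_disjoint) (use assms fin_succ in \<open>auto simp: PS_def\<close>)
  also have "\<dots> = (\<Sum>x\<in>{x. edge r y x}. card (PS r x))"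
    by (intro sum.cong refl card_image) auto
  finally show ?thesis using PS_Cons[OF assms(1)] assms fin_succ by auto
qed

fun F :: "nat \<Rightarrow> letter list \<Rightarrow> nat" where
  "F c [] = 1"
| "F c (One i # w) = F c w"
| "F c (Two # w) = (rank w + 1 + c) * F c w"

lemma ntwo_Nil[simp]: "ntwo [] = 0" by (simp add: ntwo_def)
lemma ntwo_Cons[simp]: "ntwo (One i # w) = ntwo w" "ntwo (Two # w) = Suc (ntwo w)"
  by (simp_all add: ntwo_def)

lemma main_count: "valid r y \<Longrightarrow> finite (PS r y) \<and> card (PS r y) = r ^ ntwo y * F 0 y"
proof (induction "rank y" arbitrary: y rule: less_induct)
  case less
  have IH: "\<And>x. edge r y x \<Longrightarrow> finite (PS r x) \<and> card (PS r x) = r ^ ntwo x * F 0 x"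
  proof -
    fix x assume e: "edge r y x"
    have "rank x < rank y" using edge_rank[OF e] by simp
    then show "finite (PS r x) \<and> card (PS r x) = r ^ ntwo x * F 0 x"
      using less.hyps edge_valid[OF e] by blast
  qed
  show ?case
  proof (cases y)
    case Nil then show ?thesis by (simp add: PS_Nil)
  next
    case (Cons a u)
    note C = card_PS_Cons[of y r, OF _ conjunct1[OF IH]]
    show ?thesis
    proof (cases a)
      case (One i)
      then have S: "{x. edge r y x} = {u}" using Cons less.prems by (auto simp: E1)
      have "edge r y u" using S by auto
      have "finite (PS r y) \<and> card (PS r y) = card (PS r u)" using C[unfolded S] Cons by simp
      then show ?thesis using IH[OF \<open>edge r y u\<close>] Cons One by simp
    next
      case Two
      have S: "{x. edge r y x} = (\<lambda>i. One i # u) ` {1..r} \<union> Cons Two ` {x. edge r u x}"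
        using Cons Two less.prems by (auto simp: E2)
      have vu: "valid r u" using less.prems Cons Two by simp
      have fu: "finite {x. edge r u x}" by (rule fin_succ)
      have "card (PS r y) = (\<Sum>x\<in>{x. edge r y x}. r ^ ntwo x * F 0 x)"
        using C Cons IH by simp
      also have "\<dots> = (\<Sum>x\<in>(\<lambda>i. One i # u) ` {1..r}. r ^ ntwo x * F 0 x)
           + (\<Sum>x\<in>Cons Two ` {x. edge r u x}. r ^ ntwo x * F 0 x)"
        unfolding S by (rule sum.union_disjoint) (use fu in auto)
      also have "(\<Sum>x\<in>(\<lambda>i. One i # u) ` {1..r}. r ^ ntwo x * F 0 x) = r * (r ^ ntwo u * F 0 u)"
        by (subst sum.reindex) (auto simp: inj_on_def)
      also have "(\<Sum>x\<in>Cons Two ` {x. edge r u x}. r ^ ntwo x * F 0 x)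
          = r * rank u * (\<Sum>x\<in>{x. edge r u x}. r ^ ntwo x * F 0 x)"
      proof -
        have "(\<Sum>x\<in>Cons Two ` {x. edge r u x}. r ^ ntwo x * F 0 x)
            = (\<Sum>x\<in>{x. edge r u x}. r ^ ntwo (Two # x) * F 0 (Two # x))"
          by (subst sum.reindex) auto
        also have "\<dots> = (\<Sum>x\<in>{x. edge r u x}. r * rank u * (r ^ ntwo x * F 0 x))"
          by (intro sum.cong refl) (auto dest!: edge_rank)
        finally show ?thesis by (simp add: sum_distrib_left)
      qed
      also have "(\<Sum>x\<in>{x. edge r u x}. r ^ ntwo x * F 0 x) = (if u = [] then 0 else r ^ ntwo u * F 0 u)"
      proof (cases "u = []")
        case True then show ?thesis by simp
      next
        case False
        have IHu: "\<And>x. edge r u x \<Longrightarrow> finite (PS r x) \<and> card (PS r x) = r ^ ntwo x * F 0 x"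
        proof -
          fix x assume e: "edge r u x"
          have "rank x < rank y" using edge_rank[OF e] Cons Two by simp
          then show "finite (PS r x) \<and> card (PS r x) = r ^ ntwo x * F 0 x"
            using less.hyps edge_valid[OF e] by blast
        qed
        have "(\<Sum>x\<in>{x. edge r u x}. r ^ ntwo x * F 0 x) = (\<Sum>x\<in>{x. edge r u x}. card (PS r x))"
          using IHu by simp
        also have "\<dots> = card (PS r u)" using card_PS_Cons[of u r] False IHu by simp
        also have "\<dots> = r ^ ntwo u * F 0 u" using less.hyps[of u] vu Cons Two by simp
        finally show ?thesis using False by simp
      qed
      finally have "card (PS r y) = r ^ ntwo y * F 0 y"
        using Cons Two by (cases "u = []") (auto simp: algebra_simps)
      moreover have "finite (PS r y)" using C Cons IH by simp
      ultimately show ?thesis by simp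
    qed
  qed
qed

lemma rank_append[simp]: "rank (x @ y) = rank x + rank y" by (simp add: rank_def)
lemma ntwo_snoc[simp]: "ntwo (y @ [One i]) = ntwo y" "ntwo (y @ [Two]) = Suc (ntwo y)"
  by (simp_all add: ntwo_def)

lemma F_snoc_Two: "F c (y @ [Two]) = (c+1) * F (c+2) y"
  by (induction c y rule: F.induct) (auto simp: algebra_simps)
lemma F_snoc_One: "F c (y @ [One i]) = F (c+1) y"
  by (induction c y rule: F.induct) (auto simp: algebra_simps)

lemma blocks_ne: "blocks w \<noteq> []"
  by (induction w rule: blocks.induct) auto

lemma beta_Two: "beta (y @ [Two]) 0 = 0" "beta (y @ [Two]) (Suc k) = beta y k"
  by (simp_all add: beta_def)
lemma beta_One: "beta (y @ [One i]) 0 = Suc (beta y 0)" "beta (y @ [One i]) (Suc k) = beta y (Suc k)"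
  using blocks_ne[of "rev y"] by (auto simp: beta_def hd_conv_nth neq_Nil_conv)

lemma sum_Two: "(\<Sum>k<Suc j. beta (y@[Two]) k) = (\<Sum>k<j. beta y k)"
  by (simp add: sum.lessThan_Suc_shift beta_Two del: sum.lessThan_Suc)
lemma sum_One: "(\<Sum>k<Suc j. beta (y@[One i]) k) = Suc (\<Sum>k<Suc j. beta y k)"
  by (simp add: sum.lessThan_Suc_shift beta_One del: sum.lessThan_Suc)

lemma g_Two: "g (y @ [Two]) (Suc j) = (if j = 0 then 1 else g y j + 2)"
  unfolding g_def sum_Two by simp
lemma g_One: "j \<ge> 1 \<Longrightarrow> g (y @ [One i]) j = g y j + 1"
proof -
  assume "j \<ge> 1"
  then obtain k where "j = Suc k" by (cases j) auto
  then show ?thesis unfolding \<open>j = Suc k\<close> g_def sum_One by simp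
qed

lemma Q_F: "(\<Prod>j=1..ntwo y. g y j + c) = F c y"
proof (induction y arbitrary: c rule: rev_induct)
  case Nil then show ?case by simp
next
  case (snoc a y)
  show ?case
  proof (cases a)
    case (One i)
    have "(\<Prod>j=1..ntwo (y @ [a]). g (y @ [a]) j + c) = (\<Prod>j=1..ntwo y. g y j + (c + 1))"
      using One by (intro prod.cong refl) (auto simp: g_One)
    also have "\<dots> = F (c+1) y" by (rule snoc.IH)
    finally show ?thesis using One by (simp add: F_snoc_One)
  next
    case Two
    have "(\<Prod>j=1..ntwo (y @ [a]). g (y @ [a]) j + c) = (\<Prod>j=1..Suc (ntwo y). g (y @ [Two]) j + c)"
      using Two by simp
    also have "\<dots> = (g (y @ [Two]) 1 + c) * (\<Prod>j=Suc 1..Suc (ntwo y). g (y @ [Two]) j + c)"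
      by (subst prod.atLeast_Suc_atMost) auto
    also have "(\<Prod>j=Suc 1..Suc (ntwo y). g (y @ [Two]) j + c) = (\<Prod>j=1..ntwo y. g (y @ [Two]) (Suc j) + c)"
      by (rule prod.shift_bounds_cl_Suc_ivl)
    also have "\<dots> = (\<Prod>j=1..ntwo y. g y j + (c + 2))"
      by (intro prod.cong refl) (auto simp: g_Two)
    also have "\<dots> = F (c+2) y" by (rule snoc.IH)
    finally show ?thesis using Two by (simp add: F_snoc_Two g_Two)
  qed
qed

lemma s_Cons[simp]: "s [] = []" "s (One i # w) = One 1 # s w" "s (Two # w) = Two # s w"
  by (simp_all add: s_def)

lemma rank_s[simp]: "rank (s w) = rank w"
  by (induction w rule: F.induct[of _ 0]) auto

lemma ntwo_s[simp]: "ntwo (s w) = ntwo w"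
  by (induction w rule: F.induct[of _ 0]) auto

lemma F_s[simp]: "F c (s w) = F c w"
  by (induction w rule: F.induct[of _ c]) auto

lemma valid_s: "valid 1 (s w)"
  by (induction w rule: F.induct[of _ 0]) auto

theorem mainTheorem4:
  fixes r :: nat and v :: "letter list"
  assumes "r \<ge> 1" and "valid r v"
  shows "dpaths r [] v = dpaths 1 [] (s v) * r ^ ntwo v
       \<and> dpaths 1 [] (s v) * r ^ ntwo v = r ^ ntwo v * (\<Prod>j=1..ntwo v. g v j)"
proof -
  have a: "dpaths r [] v = r ^ ntwo v * F 0 v"
    using main_count[OF assms(2)] by (simp add: dpaths_PS)
  have b: "dpaths 1 [] (s v) = F 0 v"
    using main_count[OF valid_s[of v]] by (simp add: dpaths_PS)
  have c: "(\<Prod>j=1..ntwo v. g v j) = F 0 v"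
    using Q_F[of v 0] by simp
  show ?thesis using a b c by simp
qed

end
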